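(* Let $QC$ be an $n$-qubit quantum circuit composed of a sequence of stages, each stage being a $k$-controlled-NOT gate (for various $k\ge 0$) acting on some of the $n$ qubits. Suppose the circuit is affected by a single Pauli fault of type $\sigma_x$ or $\sigma_y$: an unwanted $\sigma_x$ or $\sigma_y$ is applied to one qubit wire at one gate-external error location, i.e. on that wire either before the first stage, between two consecutive stages, or after the last stage. Then for every computational basis input state $|s\rangle$ ($s\in\{0,1\}^n$), measuring the output of the faulty circuit in the computational basis detects the fault: the measured outcome differs from the output $GC|s\rangle$ of the ideal (fault-free) circuit $GC$.
   Context: Pauli matrices: $\sigma_x=|1\rangle\langle 0|+|0\rangle\langle 1|$, $\sigma_y=i|0\rangle\langle 1|-i|1\rangle\langle 0|$, $\sigma_z=|0\rangle\langle 0|-|1\rangle\langle 1|$. A $k$-controlled-NOT ($k$-CN) gate flips its target qubit (applies $\sigma_x$) exactly when all of its $k$ control qubits are in state $|1\rangle$, and acts as the identity otherwise; it is a permutation of computational basis states. The ideal circuit $GC$ is the same network without the fault. A fault is detected by an input if the computational-basis measurement outcome of the faulty circuit differs from that of $GC$ on that input. *)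

theory Defs
  imports Complex_Main
begin

text \<open>Computational basis states of n qubits: boolean lists of length n
 (False = |0>, True = |1>). A state vector is an amplitude function on basis states.\<close>

type_synonym basis = "bool list"
type_synonym qstate = "basis \<Rightarrow> complex"

definition ket :: "basis \<Rightarrow> qstate" where
  "ket x = (\<lambda>y. if y = x then 1 else 0)"

text \<open>A k-CN gate: set of control qubits C (k = card C) and a target qubit t.\<close>
type_synonym gate = "nat set \<times> nat"

definition wf_gate :: "nat \<Rightarrow> gate \<Rightarrow> bool" where
  "wf_gate n g = (fst g \<subseteq> {..<n} \<and> snd g < n \<and> snd g \<notin> fst g)"

definition cn_perm :: "gate \<Rightarrow> basis \<Rightarrow> basis" where
  "cn_perm g x = (if (\<forall>c\<in>fst g. x ! c) then x[snd g := \<not> x ! snd g] else x)"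

text \<open>Linear action of the gate: U |x> = |cn_perm g x>; since cn_perm g is an
 involution, (U psi)(y) = psi (cn_perm g y).\<close>
definition apply_gate :: "gate \<Rightarrow> qstate \<Rightarrow> qstate" where
  "apply_gate g \<psi> = (\<lambda>y. \<psi> (cn_perm g y))"

definition run :: "gate list \<Rightarrow> qstate \<Rightarrow> qstate" where
  "run gs \<psi> = fold apply_gate gs \<psi>"

text \<open>Single-qubit operators as 2x2 matrices M a b = <a|M|b>.\<close>
type_synonym op1 = "bool \<Rightarrow> bool \<Rightarrow> complex"

definition sigma_x :: op1 where
  "sigma_x a b = (if a \<noteq> b then 1 else 0)"

definition sigma_y :: op1 where
  "sigma_y a b = (if \<not> a \<and> b then \<i> else if a \<and> \<not> b then - \<i> else 0)"

definition apply_1q :: "op1 \<Rightarrow> nat \<Rightarrow> qstate \<Rightarrow> qstate" where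
  "apply_1q M q \<psi> = (\<lambda>y. \<Sum>b\<in>UNIV. M (y ! q) b * \<psi> (y[q := b]))"

text \<open>Faulty circuit: Pauli P on wire q at error location j (0 = before first stage,
 length gs = after last stage), input basis state s.\<close>
definition faulty_run :: "gate list \<Rightarrow> nat \<Rightarrow> nat \<Rightarrow> op1 \<Rightarrow> qstate \<Rightarrow> qstate" where
  "faulty_run gs j q P \<psi> = run (drop j gs) (apply_1q P q (run (take j gs) \<psi>))"

definition meas_prob :: "qstate \<Rightarrow> basis \<Rightarrow> real" where
  "meas_prob \<psi> t = (cmod (\<psi> t))\<^sup>2"

end

theory Submission
  imports Defs
begin

lemma cn_invol:
  assumes "snd g \<notin> fst g"
  shows "cn_perm g (cn_perm g x) = x"
proof (cases "\<forall>c\<in>fst g. x ! c")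
  case True
  define x' where "x' = x[snd g := \<not> x ! snd g]"
  have h1: "\<forall>c\<in>fst g. x' ! c" unfolding x'_def using True assms
    by (metis nth_list_update_neq)
  have e1: "cn_perm g x = x'" unfolding cn_perm_def x'_def using True by (rule if_P)
  have e2: "cn_perm g x' = x'[snd g := \<not> x' ! snd g]" unfolding cn_perm_def using h1 by (rule if_P)
  have e3: "x'[snd g := \<not> x' ! snd g] = x"
  proof (cases "snd g < length x")
    case True
    then show ?thesis unfolding x'_def by simp
  next
    case False
    then show ?thesis unfolding x'_def by (simp add: list_update_beyond)
  qed
  show ?thesis using e1 e2 e3 by simp
next
  case False
  have "cn_perm g x = x" unfolding cn_perm_def using False by (rule if_not_P)
  then show ?thesis by simp
qed

lemma cn_inj:
  assumes "snd g \<notin> fst g"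
  shows "inj (cn_perm g)"
  by (metis assms cn_invol injI)

lemma apply_gate_ket:
  assumes "snd g \<notin> fst g"
  shows "apply_gate g (\<lambda>y. c * ket x y) = (\<lambda>y. c * ket (cn_perm g x) y)"
proof
  fix y
  have "(cn_perm g y = x) = (y = cn_perm g x)"
    using cn_invol[OF assms] by metis
  then show "apply_gate g (\<lambda>y. c * ket x y) y = c * ket (cn_perm g x) y"
    unfolding apply_gate_def ket_def by simp
qed

lemma run_ket:
  assumes "\<forall>g\<in>set gs. snd g \<notin> fst g"
  shows "run gs (\<lambda>y. c * ket x y) = (\<lambda>y. c * ket (fold cn_perm gs x) y)"
  using assms
proof (induction gs arbitrary: x)
  case Nil
  then show ?case by (simp add: run_def)
next
  case (Cons g gs)
  then show ?case by (simp add: run_def apply_gate_ket)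
qed

lemma fold_inj:
  assumes "\<forall>g\<in>set gs. snd g \<notin> fst g"
  shows "inj (fold cn_perm gs)"
  using assms
proof (induction gs)
  case Nil
  then show ?case by simp
next
  case (Cons g gs)
  then have "inj (fold cn_perm gs \<circ> cn_perm g)"
    using cn_inj by (intro inj_compose) auto
  then show ?case by (simp add: comp_def)
qed

lemma upd_iff:
  assumes "q < length x"
  shows "(y[q := b] = x) = (b = x ! q \<and> (y = x \<or> y = x[q := \<not> x ! q]))"
proof
  assume h: "y[q := b] = x"
  have ly: "length y = length x" using h by (metis length_list_update)
  have "b = x ! q" using h assms ly by (metis nth_list_update_eq)
  moreover have "y = x \<or> y = x[q := \<not> x ! q]"
  proof (cases "y ! q = b")
    case True
    have e: "y[q := y ! q] = y" by (rule list_update_id)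
    have "y[q := b] = y" using e unfolding True .
    then show ?thesis using h by simp
  next
    case False
    then have yq: "y ! q = (\<not> b)" by blast
    have e: "y[q := y ! q] = y" by (rule list_update_id)
    have "y[q := \<not> b] = y" using e unfolding yq .
    then have "y = (y[q := b])[q := \<not> b]" by simp
    then have "y = x[q := \<not> b]" unfolding h .
    then show ?thesis using \<open>b = x ! q\<close> by simp
  qed
  ultimately show "b = x ! q \<and> (y = x \<or> y = x[q := \<not> x ! q])" by blast
next
  assume a: "b = x ! q \<and> (y = x \<or> y = x[q := \<not> x ! q])"
  then have bq: "b = x ! q" by blast
  from a show "y[q := b] = x"
  proof (elim conjE disjE)
    assume "y = x" then show ?thesis unfolding bq by (simp only: list_update_id)
  next
    assume "y = x[q := \<not> x ! q]" then show ?thesis unfolding bq by (simp only: list_update_id list_update_overwrite)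
  qed
qed
lemma apply_1q_ket:
  assumes "q < length x" and "P = sigma_x \<or> P = sigma_y"
  shows "\<exists>m. cmod m = 1 \<and> apply_1q P q (\<lambda>y. c * ket x y) = (\<lambda>y. (c * m) * ket (x[q := \<not> x ! q]) y)"
proof -
  define x' where "x' = x[q := \<not> x ! q]"
  have x'q: "x' ! q = (\<not> x ! q)" using assms(1) by (simp add: x'_def)
  have nx: "x \<noteq> x'" using x'q by auto
  have z: "P (x ! q) (x ! q) = 0" using assms(2) by (auto simp: sigma_x_def sigma_y_def)
  have m: "cmod (P (\<not> x ! q) (x ! q)) = 1" using assms(2) by (auto simp: sigma_x_def sigma_y_def)
  have key: "apply_1q P q (\<lambda>y. c * ket x y) y = (c * P (\<not> x ! q) (x ! q)) * ket x' y" for y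
  proof -
    define D where "D = (y = x \<or> y = x')"
    have "apply_1q P q (\<lambda>y. c * ket x y) y = (\<Sum>b\<in>UNIV. P (y ! q) b * (c * (if y[q := b] = x then 1 else 0)))"
      unfolding apply_1q_def ket_def by simp
    also have "\<dots> = (\<Sum>b\<in>UNIV. (if b = x ! q then (if D then P (y ! q) b * c else 0) else 0))"
      by (rule sum.cong) (auto simp: upd_iff[OF assms(1)] D_def x'_def)
    also have "\<dots> = (if D then P (y ! q) (x ! q) * c else 0)"
      by (subst sum.delta) auto
    also have "\<dots> = (c * P (\<not> x ! q) (x ! q)) * ket x' y"
      using nx x'q z unfolding D_def ket_def by auto
    finally show ?thesis .
  qed
  show ?thesis
    using key m unfolding x'_def by blast
qed

lemma cn_length: "length (cn_perm g x) = length x"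
  by (simp add: cn_perm_def)

lemma fold_length: "length (fold cn_perm gs x) = length x"
  by (induction gs arbitrary: x) (auto simp: cn_length)

theorem theorem1:
  fixes n :: nat and gs :: "gate list" and j q :: nat and P :: op1 and s :: basis
  assumes "\<forall>g\<in>set gs. wf_gate n g"
    and "j \<le> length gs"
    and "q < n"
    and "P = sigma_x \<or> P = sigma_y"
    and "length s = n"
  shows "\<exists>u t. meas_prob (run gs (ket s)) u = 1
             \<and> meas_prob (faulty_run gs j q P (ket s)) t = 1
             \<and> t \<noteq> u"
proof -
  have wf: "\<forall>g\<in>set gs. snd g \<notin> fst g" using assms(1) by (auto simp: wf_gate_def)
  have wft: "\<forall>g\<in>set (take j gs). snd g \<notin> fst g" using wf by (meson in_set_takeD)
  have wfd: "\<forall>g\<in>set (drop j gs). snd g \<notin> fst g" using wf by (meson in_set_dropD)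
  have ks: "ket s = (\<lambda>y. 1 * ket s y)" by simp
  define x where "x = fold cn_perm (take j gs) s"
  have lx: "q < length x" using assms(3,5) by (simp add: x_def fold_length)
  have r1: "run (take j gs) (ket s) = (\<lambda>y. 1 * ket x y)"
    using run_ket[OF wft, of 1 s] by (simp add: x_def)
  obtain m where m: "cmod m = 1"
    and a: "apply_1q P q (\<lambda>y. 1 * ket x y) = (\<lambda>y. (1 * m) * ket (x[q := \<not> x ! q]) y)"
    using apply_1q_ket[OF lx assms(4)] by blast
  define F where "F = fold cn_perm (drop j gs)"
  have fr: "faulty_run gs j q P (ket s) = (\<lambda>y. (1 * m) * ket (F (x[q := \<not> x ! q])) y)"
    unfolding faulty_run_def r1 a using run_ket[OF wfd] by (simp add: F_def)
  have gsplit: "fold cn_perm gs s = F x"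
    unfolding F_def x_def by (metis append_take_drop_id comp_apply fold_append)
  have gr: "run gs (ket s) = (\<lambda>y. 1 * ket (F x) y)"
    using run_ket[OF wf, of 1 s] gsplit by simp
  have neq: "F (x[q := \<not> x ! q]) \<noteq> F x"
  proof
    assume "F (x[q := \<not> x ! q]) = F x"
    then have "x[q := \<not> x ! q] = x" using fold_inj[OF wfd] unfolding F_def by (meson injD)
    then show False using lx by (metis nth_list_update_eq)
  qed
  show ?thesis
    apply (rule exI[of _ "F x"], rule exI[of _ "F (x[q := \<not> x ! q])"])
    unfolding gr fr using neq m by (simp add: meas_prob_def ket_def norm_mult)
qed

end
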